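(* Let $P$ be a finite $(3+1)$-free poset and let $I^P_{\mathrm{plac}}$ be the two-sided ideal of $\mathcal{U}_P$ defined below. Then for all integers $k,\ell$ and all subsets $S\subseteq P$, $$e^P_k(\mathbf{u}_S)\,e^P_\ell(\mathbf{u}_S)\equiv e^P_\ell(\mathbf{u}_S)\,e^P_k(\mathbf{u}_S)\pmod{I^P_{\mathrm{plac}}}.$$
   Context: A poset is $(3+1)$-free if it has no induced subposet isomorphic to the disjoint union of a 3-element chain and a 1-element chain. For $a,b\in P$ write $a<_P b$ if $a$ is strictly less than $b$, and $a\sim_P b$ if $a,b$ are incomparable or equal. $\mathcal{U}_P=\mathbb{Z}\langle u_a : a\in P\rangle$ is the free associative ring on noncommuting variables $u_a$. For $S\subseteq P$ and $k\in\mathbb{Z}$, $e^P_k(\mathbf{u}_S)=\sum u_{a_1}u_{a_2}\cdots u_{a_k}$, summed over all $a_1,\dots,a_k\in S$ with $a_1>_P a_2>_P\cdots>_P a_k$; by convention $e^P_0(\mathbf{u}_S)=1$ (even if $S=\varnothing$) and $e^P_k(\mathbf{u}_S)=0$ for $k<0$ or $k>|S|$. $I^P_{\mathrm{plac}}$ is the two-sided ideal generated by: (1) $u_bu_au_c-u_bu_cu_a$ whenever $a<_P b$, $c\not<_P b$ and $a<_P c$; (2) $u_cu_au_b-u_au_cu_b$ whenever $b\not<_P a$, $b<_P c$ and $a<_P c$; (3) $u_cu_au_b-u_bu_cu_a$ whenever $a\sim_P b$, $b\sim_P c$ and $a<_P c$. *)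

theory Defs
  imports Main
begin

definition strict_poset :: "'a set \<Rightarrow> ('a \<Rightarrow> 'a \<Rightarrow> bool) \<Rightarrow> bool" where
  "strict_poset P lt \<longleftrightarrow>
     (\<forall>a\<in>P. \<not> lt a a) \<and>
     (\<forall>a\<in>P. \<forall>b\<in>P. \<forall>c\<in>P. lt a b \<longrightarrow> lt b c \<longrightarrow> lt a c)"

text \<open>a ~_P b: incomparable or equal.\<close>
definition incomp :: "('a \<Rightarrow> 'a \<Rightarrow> bool) \<Rightarrow> 'a \<Rightarrow> 'a \<Rightarrow> bool" where
  "incomp lt a b \<longleftrightarrow> \<not> lt a b \<and> \<not> lt b a"

text \<open>(3+1)-free: no a <_P b <_P c together with d incomparable to all of a, b, c
  (d is then automatically distinct from a, b, c).\<close>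
definition three_one_free :: "'a set \<Rightarrow> ('a \<Rightarrow> 'a \<Rightarrow> bool) \<Rightarrow> bool" where
  "three_one_free P lt \<longleftrightarrow>
     \<not> (\<exists>a\<in>P. \<exists>b\<in>P. \<exists>c\<in>P. \<exists>d\<in>P. lt a b \<and> lt b c \<and>
          d \<noteq> a \<and> d \<noteq> b \<and> d \<noteq> c \<and>
          incomp lt d a \<and> incomp lt d b \<and> incomp lt d c)"

text \<open>Elements of the free associative ring Z<u_a> are represented by their coefficient
  function on words (lists of letters); genuine ring elements have finite support.\<close>
type_synonym 'a ncpoly = "'a list \<Rightarrow> int"

definition nc_finite :: "'a ncpoly \<Rightarrow> bool" where
  "nc_finite f \<longleftrightarrow> finite {w. f w \<noteq> 0}"

definition nc_zero :: "'a ncpoly" where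
  "nc_zero = (\<lambda>w. 0)"

definition nc_add :: "'a ncpoly \<Rightarrow> 'a ncpoly \<Rightarrow> 'a ncpoly" where
  "nc_add f g = (\<lambda>w. f w + g w)"

definition nc_sub :: "'a ncpoly \<Rightarrow> 'a ncpoly \<Rightarrow> 'a ncpoly" where
  "nc_sub f g = (\<lambda>w. f w - g w)"

definition nc_mult :: "'a ncpoly \<Rightarrow> 'a ncpoly \<Rightarrow> 'a ncpoly" where
  "nc_mult f g = (\<lambda>w. \<Sum>i\<le>length w. f (take i w) * g (drop i w))"

definition nc_mono :: "'a list \<Rightarrow> 'a ncpoly" where
  "nc_mono v = (\<lambda>w. if w = v then 1 else 0)"

inductive_set nc_ideal :: "'a ncpoly set \<Rightarrow> 'a ncpoly set" for G where
  gen: "g \<in> G \<Longrightarrow> g \<in> nc_ideal G"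
| zero: "nc_zero \<in> nc_ideal G"
| add: "f \<in> nc_ideal G \<Longrightarrow> g \<in> nc_ideal G \<Longrightarrow> nc_add f g \<in> nc_ideal G"
| lmult: "nc_finite x \<Longrightarrow> f \<in> nc_ideal G \<Longrightarrow> nc_mult x f \<in> nc_ideal G"
| rmult: "nc_finite x \<Longrightarrow> f \<in> nc_ideal G \<Longrightarrow> nc_mult f x \<in> nc_ideal G"

definition plac_gens :: "'a set \<Rightarrow> ('a \<Rightarrow> 'a \<Rightarrow> bool) \<Rightarrow> 'a ncpoly set" where
  "plac_gens P lt =
     {nc_sub (nc_mono [b, a, c]) (nc_mono [b, c, a]) | a b c.
        a \<in> P \<and> b \<in> P \<and> c \<in> P \<and> lt a b \<and> \<not> lt c b \<and> lt a c}
   \<union> {nc_sub (nc_mono [c, a, b]) (nc_mono [a, c, b]) | a b c.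
        a \<in> P \<and> b \<in> P \<and> c \<in> P \<and> \<not> lt b a \<and> lt b c \<and> lt a c}
   \<union> {nc_sub (nc_mono [c, a, b]) (nc_mono [b, c, a]) | a b c.
        a \<in> P \<and> b \<in> P \<and> c \<in> P \<and> incomp lt a b \<and> incomp lt b c \<and> lt a c}"

definition I_plac :: "'a set \<Rightarrow> ('a \<Rightarrow> 'a \<Rightarrow> bool) \<Rightarrow> 'a ncpoly set" where
  "I_plac P lt = nc_ideal (plac_gens P lt)"

text \<open>e^P_k(u_S): sum of u_{a1}...u_{ak} over a1 >_P a2 >_P ... >_P ak in S.
  For k < 0 the length condition is never met (so 0); for k = 0 this is the empty word, i.e. 1.\<close>
definition elem_sym :: "('a \<Rightarrow> 'a \<Rightarrow> bool) \<Rightarrow> int \<Rightarrow> 'a set \<Rightarrow> 'a ncpoly" where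
  "elem_sym lt k S = (\<lambda>w. if int (length w) = k \<and> set w \<subseteq> S \<and> sorted_wrt (\<lambda>x y. lt y x) w
                          then 1 else 0)"

end

theory Submission
  imports Defs "HOL-Library.Poly_Mapping"
begin



datatype 'a wrd = W (unW: "'a list")

instantiation wrd :: (type) monoid_add
begin
definition zero_wrd :: "'a wrd" where "zero_wrd = W []"
definition plus_wrd :: "'a wrd \<Rightarrow> 'a wrd \<Rightarrow> 'a wrd" where "plus_wrd x y = W (unW x @ unW y)"
instance
  apply standard
  by (auto simp: zero_wrd_def plus_wrd_def intro: wrd.expand)
end

lemma W_plus_W [simp]: "W a + W b = W (a @ b)"
  by (simp add: plus_wrd_def)

type_synonym 'a RR = "'a wrd \<Rightarrow>\<^sub>0 int"

definition phi :: "'a RR \<Rightarrow> 'a ncpoly" where "phi x = (\<lambda>w. Poly_Mapping.lookup x (W w))"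

lemma phi_finite: "nc_finite (phi x)"
proof -
  have "{w. phi x w \<noteq> 0} \<subseteq> unW ` Poly_Mapping.keys x"
  proof
    fix w assume "w \<in> {w. phi x w \<noteq> 0}"
    then have "W w \<in> Poly_Mapping.keys x" by (simp add: phi_def Poly_Mapping.in_keys_iff)
    then show "w \<in> unW ` Poly_Mapping.keys x" by (force intro: image_eqI[where x="W w"])
  qed
  then show ?thesis unfolding nc_finite_def by (rule finite_subset) simp
qed

lemma inner_sum:
  "(\<Sum>q. Poly_Mapping.lookup y q when W w = W a + q) =
     (if (\<exists>b. w = a @ b) then Poly_Mapping.lookup y (W (drop (length a) w)) else 0)"
proof (cases "\<exists>b. w = a @ b")
  case True
  then obtain b where b: "w = a @ b" by blast
  have "(\<Sum>q. Poly_Mapping.lookup y q when W w = W a + q) = (\<Sum>q. if q = W b then Poly_Mapping.lookup y q else 0)"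
  proof (rule Sum_any.cong)
    fix q show "(Poly_Mapping.lookup y q when W w = W a + q) = (if q = W b then Poly_Mapping.lookup y q else 0)"
      by (cases q) (auto simp: b when_def)
  qed
  then show ?thesis using True b by simp
next
  case False
  have "\<forall>q. (Poly_Mapping.lookup y q when W w = W a + q) = 0"
  proof
    fix q show "(Poly_Mapping.lookup y q when W w = W a + q) = 0"
      using False by (cases q) (auto simp: when_def)
  qed
  then show ?thesis using False by simp
qed

lemma phi_mult: "phi (x * y) = nc_mult (phi x) (phi y)"
proof
  fix w
  define f where "f l = Poly_Mapping.lookup x l * (\<Sum>q. Poly_Mapping.lookup y q when W w = l + q)" for l
  have "phi (x*y) w = Sum_any f" by (simp add: phi_def lookup_mult f_def)
  also have "Sum_any f = sum f ((\<lambda>i. W (take i w)) ` {..length w})"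
  proof (rule Sum_any.expand_superset)
    show "{a. f a \<noteq> 0} \<subseteq> (\<lambda>i. W (take i w)) ` {..length w}"
    proof
      fix l assume "l \<in> {a. f a \<noteq> 0}"
      then have nz: "f l \<noteq> 0" by simp
      obtain a where l: "l = W a" by (cases l)
      from nz have "\<exists>b. w = a @ b" unfolding f_def l inner_sum by (auto split: if_splits)
      then obtain b where "w = a @ b" by blast
      then show "l \<in> (\<lambda>i. W (take i w)) ` {..length w}"
        using l by (auto intro!: image_eqI[where x="length a"])
    qed
  qed simp
  also have "\<dots> = (\<Sum>i\<le>length w. f (W (take i w)))"
  proof (rule sum.reindex_cong[where l="\<lambda>i. W (take i w)"])
    show "inj_on (\<lambda>i. W (take i w)) {..length w}"
    proof (rule inj_onI)
      fix i j assume "i \<in> {..length w}" "j \<in> {..length w}" "W (take i w) = W (take j w)"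
      then have "length (take i w) = length (take j w)" by simp
      with \<open>i \<in> {..length w}\<close> \<open>j \<in> {..length w}\<close> show "i = j" by simp
    qed
  qed simp_all
  also have "\<dots> = nc_mult (phi x) (phi y) w"
    unfolding nc_mult_def phi_def
  proof (rule sum.cong)
    fix i assume "i \<in> {..length w}"
    then have "length (take i w) = i" by auto
    moreover have "\<exists>b. w = take i w @ b" by (rule exI[of _ "drop i w"]) simp
    ultimately show "f (W (take i w)) = Poly_Mapping.lookup x (W (take i w)) * Poly_Mapping.lookup y (W (drop i w))"
      unfolding f_def inner_sum by simp
  qed simp
  finally show "phi (x * y) w = nc_mult (phi x) (phi y) w" .
qed




definition L :: "'a \<Rightarrow> 'a RR" where "L a = Poly_Mapping.single (W [a]) 1"
definition mono :: "'a list \<Rightarrow> 'a RR" where "mono v = Poly_Mapping.single (W v) 1"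

lemma mono_append: "mono (u @ v) = mono u * mono v"
  by (simp add: mono_def mult_single)

lemma mono_Nil [simp]: "mono [] = 1"
  by (simp add: mono_def zero_wrd_def[symmetric])

lemma mono_Cons: "mono (a # v) = L a * mono v"
  using mono_append[of "[a]" v] by (simp add: L_def mono_def)

lemma phi_diff: "phi (x - y) = nc_sub (phi x) (phi y)"
  by (simp add: phi_def nc_sub_def lookup_minus)

lemma phi_add: "phi (x + y) = nc_add (phi x) (phi y)"
  by (simp add: phi_def nc_add_def lookup_add)

lemma phi_zero: "phi 0 = nc_zero"
  by (simp add: phi_def nc_zero_def)

lemma phi_mono: "phi (mono v) = nc_mono v"
  by (auto simp: phi_def nc_mono_def mono_def lookup_single when_def fun_eq_iff)

inductive_set Jid :: "'a set \<Rightarrow> ('a \<Rightarrow> 'a \<Rightarrow> bool) \<Rightarrow> 'a RR set" for P lt where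
  g1: "a \<in> P \<Longrightarrow> b \<in> P \<Longrightarrow> c \<in> P \<Longrightarrow> lt a b \<Longrightarrow> \<not> lt c b \<Longrightarrow> lt a c \<Longrightarrow>
        L b * L a * L c - L b * L c * L a \<in> Jid P lt"
| g2: "a \<in> P \<Longrightarrow> b \<in> P \<Longrightarrow> c \<in> P \<Longrightarrow> \<not> lt b a \<Longrightarrow> lt b c \<Longrightarrow> lt a c \<Longrightarrow>
        L c * L a * L b - L a * L c * L b \<in> Jid P lt"
| g3: "a \<in> P \<Longrightarrow> b \<in> P \<Longrightarrow> c \<in> P \<Longrightarrow> incomp lt a b \<Longrightarrow> incomp lt b c \<Longrightarrow> lt a c \<Longrightarrow>
        L c * L a * L b - L b * L c * L a \<in> Jid P lt"
| zero: "0 \<in> Jid P lt"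
| add: "x \<in> Jid P lt \<Longrightarrow> y \<in> Jid P lt \<Longrightarrow> x + y \<in> Jid P lt"
| lmult: "x \<in> Jid P lt \<Longrightarrow> r * x \<in> Jid P lt"
| rmult: "x \<in> Jid P lt \<Longrightarrow> x * r \<in> Jid P lt"

lemma LLL: "L a * L b * L c = mono [a,b,c]"
  by (simp add: mono_Cons mult.assoc)

lemma Jid_sub: "x \<in> Jid P lt \<Longrightarrow> phi x \<in> I_plac P lt"
  unfolding I_plac_def
proof (induction rule: Jid.induct)
  case (g1 a b c)
  then show ?case unfolding LLL phi_diff phi_mono
    by (intro nc_ideal.gen) (unfold plac_gens_def, blast)
next
  case (g2 a b c)
  then show ?case unfolding LLL phi_diff phi_mono
    by (intro nc_ideal.gen) (unfold plac_gens_def, blast)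
next
  case (g3 a b c)
  then show ?case unfolding LLL phi_diff phi_mono
    by (intro nc_ideal.gen) (unfold plac_gens_def, blast)
next
  case zero
  then show ?case by (simp add: phi_zero nc_ideal.zero)
next
  case (add x y)
  then show ?case by (simp add: phi_add nc_ideal.add)
next
  case (lmult x r)
  then show ?case by (simp add: phi_mult nc_ideal.lmult phi_finite)
next
  case (rmult x r)
  then show ?case by (simp add: phi_mult nc_ideal.rmult phi_finite)
qed

definition eqv :: "'a set \<Rightarrow> ('a \<Rightarrow> 'a \<Rightarrow> bool) \<Rightarrow> 'a RR \<Rightarrow> 'a RR \<Rightarrow> bool" where
  "eqv P lt x y \<longleftrightarrow> x - y \<in> Jid P lt"

lemma Jid_neg: "x \<in> Jid P lt \<Longrightarrow> - x \<in> Jid P lt"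
  using Jid.lmult[of x P lt "-1"] by simp

lemma Jid_diff: "x \<in> Jid P lt \<Longrightarrow> y \<in> Jid P lt \<Longrightarrow> x - y \<in> Jid P lt"
  using Jid.add[OF _ Jid_neg] by (metis diff_conv_add_uminus)

lemma eqv_refl [simp]: "eqv P lt x x"
  by (simp add: eqv_def Jid.zero)

lemma eqv_eq: "x = y \<Longrightarrow> eqv P lt x y"
  by simp

lemma eqv_sym: "eqv P lt x y \<Longrightarrow> eqv P lt y x"
  unfolding eqv_def using Jid_neg by fastforce

lemma eqv_trans [trans]: "eqv P lt x y \<Longrightarrow> eqv P lt y z \<Longrightarrow> eqv P lt x z"
  unfolding eqv_def using Jid.add by fastforce

lemma eqv_add: "eqv P lt x y \<Longrightarrow> eqv P lt x' y' \<Longrightarrow> eqv P lt (x + x') (y + y')"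
  unfolding eqv_def using Jid.add by (fastforce simp: algebra_simps)

lemma eqv_diff: "eqv P lt x y \<Longrightarrow> eqv P lt x' y' \<Longrightarrow> eqv P lt (x - x') (y - y')"
  unfolding eqv_def using Jid_diff by (fastforce simp: algebra_simps)

lemma eqv_lmult: "eqv P lt x y \<Longrightarrow> eqv P lt (r * x) (r * y)"
  unfolding eqv_def using Jid.lmult by (fastforce simp: algebra_simps)

lemma eqv_rmult: "eqv P lt x y \<Longrightarrow> eqv P lt (x * r) (y * r)"
  unfolding eqv_def using Jid.rmult by (fastforce simp: algebra_simps)

lemma eqv_mult: "eqv P lt x y \<Longrightarrow> eqv P lt x' y' \<Longrightarrow> eqv P lt (x * x') (y * y')"
  by (meson eqv_lmult eqv_rmult eqv_trans)

lemma eqv_sum: "(\<And>i. i \<in> A \<Longrightarrow> eqv P lt (f i) (g i)) \<Longrightarrow> eqv P lt (sum f A) (sum g A)"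
proof (induction A rule: infinite_finite_induct)
  case (insert x F)
  then show ?case by (simp add: eqv_add)
qed simp_all

lemma eqv_zero: "eqv P lt x 0 \<longleftrightarrow> x \<in> Jid P lt"
  by (simp add: eqv_def)




locale plac =
  fixes P :: "'a set" and lt :: "'a \<Rightarrow> 'a \<Rightarrow> bool"
  assumes sp: "strict_poset P lt" and tof: "three_one_free P lt"
begin

abbreviation eq (infix "\<approx>" 50) where "x \<approx> y \<equiv> eqv P lt x y"

lemma irr: "a \<in> P \<Longrightarrow> \<not> lt a a"
  using sp by (simp add: strict_poset_def)

lemma trn: "a \<in> P \<Longrightarrow> b \<in> P \<Longrightarrow> c \<in> P \<Longrightarrow> lt a b \<Longrightarrow> lt b c \<Longrightarrow> lt a c"
  using sp unfolding strict_poset_def by blast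

lemma asy: "a \<in> P \<Longrightarrow> b \<in> P \<Longrightarrow> lt a b \<Longrightarrow> \<not> lt b a"
  using irr trn by blast

lemma no31: "a \<in> P \<Longrightarrow> b \<in> P \<Longrightarrow> c \<in> P \<Longrightarrow> d \<in> P \<Longrightarrow> lt a b \<Longrightarrow> lt b c \<Longrightarrow>
   d \<noteq> a \<Longrightarrow> d \<noteq> b \<Longrightarrow> d \<noteq> c \<Longrightarrow> incomp lt d a \<Longrightarrow> incomp lt d b \<Longrightarrow> incomp lt d c \<Longrightarrow> False"
  using tof unfolding three_one_free_def by blast

lemma G1: "a \<in> P \<Longrightarrow> b \<in> P \<Longrightarrow> c \<in> P \<Longrightarrow> lt a b \<Longrightarrow> \<not> lt c b \<Longrightarrow> lt a c \<Longrightarrow>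
   p * L b * L a * L c * q \<approx> p * L b * L c * L a * q"
proof -
  assume h: "a \<in> P" "b \<in> P" "c \<in> P" "lt a b" "\<not> lt c b" "lt a c"
  have "p * (L b * L a * L c - L b * L c * L a) * q \<in> Jid P lt"
    by (intro Jid.lmult Jid.rmult Jid.g1 h)
  then show ?thesis by (simp add: eqv_def algebra_simps)
qed

lemma G2: "a \<in> P \<Longrightarrow> b \<in> P \<Longrightarrow> c \<in> P \<Longrightarrow> \<not> lt b a \<Longrightarrow> lt b c \<Longrightarrow> lt a c \<Longrightarrow>
   p * L c * L a * L b * q \<approx> p * L a * L c * L b * q"
proof -
  assume h: "a \<in> P" "b \<in> P" "c \<in> P" "\<not> lt b a" "lt b c" "lt a c"
  have "p * (L c * L a * L b - L a * L c * L b) * q \<in> Jid P lt"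
    by (intro Jid.lmult Jid.rmult Jid.g2 h)
  then show ?thesis by (simp add: eqv_def algebra_simps)
qed

lemma G3: "a \<in> P \<Longrightarrow> b \<in> P \<Longrightarrow> c \<in> P \<Longrightarrow> incomp lt a b \<Longrightarrow> incomp lt b c \<Longrightarrow> lt a c \<Longrightarrow>
   p * L c * L a * L b * q \<approx> p * L b * L c * L a * q"
proof -
  assume h: "a \<in> P" "b \<in> P" "c \<in> P" "incomp lt a b" "incomp lt b c" "lt a c"
  have "p * (L c * L a * L b - L b * L c * L a) * q \<in> Jid P lt"
    by (intro Jid.lmult Jid.rmult Jid.g3 h)
  then show ?thesis by (simp add: eqv_def algebra_simps)
qed

definition chains :: "'a set \<Rightarrow> nat \<Rightarrow> 'a list set" where
  "chains T n = {w. length w = n \<and> set w \<subseteq> T \<and> sorted_wrt (\<lambda>x y. lt y x) w}"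

definition es :: "'a set \<Rightarrow> int \<Rightarrow> 'a RR" where
  "es T k = (if k < 0 then 0 else \<Sum>w\<in>chains T (nat k). mono w)"

lemma finite_chains: "finite T \<Longrightarrow> finite (chains T n)"
  unfolding chains_def
  by (rule finite_subset[OF _ finite_lists_length_eq[of T n]]) auto

lemma chains_0: "chains T 0 = {[]}"
  by (auto simp: chains_def)

lemma es_neg: "k < 0 \<Longrightarrow> es T k = 0"
  by (simp add: es_def)

lemma es_0 [simp]: "es T 0 = 1"
  by (simp add: es_def chains_0)

lemma chains_Suc: "chains T (Suc n) = (\<Union>d\<in>T. Cons d ` chains {x\<in>T. lt x d} n)"
proof (intro set_eqI iffI)
  fix w assume "w \<in> chains T (Suc n)"
  then obtain d v where w: "w = d # v" and "d \<in> T" "v \<in> chains {x\<in>T. lt x d} n"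
    unfolding chains_def by (cases w) auto
  then show "w \<in> (\<Union>d\<in>T. Cons d ` chains {x\<in>T. lt x d} n)" by blast
next
  fix w assume "w \<in> (\<Union>d\<in>T. Cons d ` chains {x\<in>T. lt x d} n)"
  then show "w \<in> chains T (Suc n)" unfolding chains_def by auto
qed

lemma FIRST:
  assumes "finite T" "k \<ge> 1"
  shows "es T k = (\<Sum>d\<in>T. L d * es {x\<in>T. lt x d} (k - 1))"
proof -
  define n where "n = nat (k - 1)"
  have "Suc (nat (k - 1)) = nat (1 + (k - 1))"
    by (rule Suc_nat_eq_nat_zadd1) (use assms(2) in simp)
  then have n: "nat k = Suc n" "nat (k - 1) = n" by (simp_all add: n_def)
  have fin: "\<And>d. finite (Cons d ` chains {x\<in>T. lt x d} n)"
    using assms(1) by (intro finite_imageI finite_chains) simp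
  have "es T k = (\<Sum>w\<in>chains T (Suc n). mono w)"
    using assms(2) n by (simp add: es_def)
  also have "\<dots> = (\<Sum>d\<in>T. \<Sum>w\<in>Cons d ` chains {x\<in>T. lt x d} n. mono w)"
    unfolding chains_Suc
    by (rule sum.UNION_disjoint) (use assms(1) fin in auto)
  also have "\<dots> = (\<Sum>d\<in>T. L d * es {x\<in>T. lt x d} (k - 1))"
  proof (rule sum.cong)
    fix d assume "d \<in> T"
    have "(\<Sum>w\<in>Cons d ` chains {x\<in>T. lt x d} n. mono w) = (\<Sum>w\<in>chains {x\<in>T. lt x d} n. mono (d # w))"
      by (rule sum.reindex_cong[where l="Cons d"]) auto
    also have "\<dots> = L d * es {x\<in>T. lt x d} (k - 1)"
      using assms(2) n by (simp add: es_def mono_Cons sum_distrib_left)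
    finally show "(\<Sum>w\<in>Cons d ` chains {x\<in>T. lt x d} n. mono w) = L d * es {x\<in>T. lt x d} (k - 1)" .
  qed simp
  finally show ?thesis .
qed

lemma SPLIT:
  assumes "finite T" "A \<subseteq> T" "\<And>a x. a \<in> A \<Longrightarrow> x \<in> T \<Longrightarrow> \<not> lt a x"
  shows "es T k = es (T - A) k + (\<Sum>a\<in>A. L a * es {x\<in>T. lt x a} (k - 1))"
proof (cases "k \<ge> 1")
  case True
  have fA: "finite A" using assms(1,2) finite_subset by blast
  have eq: "\<And>d. d \<in> T - A \<Longrightarrow> {x\<in>T - A. lt x d} = {x\<in>T. lt x d}"
    using assms(3) by blast
  have "es T k = (\<Sum>d\<in>T. L d * es {x\<in>T. lt x d} (k - 1))"
    by (rule FIRST[OF assms(1) True])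
  also have "\<dots> = (\<Sum>d\<in>T - A. L d * es {x\<in>T. lt x d} (k - 1)) + (\<Sum>a\<in>A. L a * es {x\<in>T. lt x a} (k - 1))"
    using sum.subset_diff[OF assms(2) assms(1)] by simp
  also have "(\<Sum>d\<in>T - A. L d * es {x\<in>T. lt x d} (k - 1)) = es (T - A) k"
    using FIRST[of "T - A" k] True assms(1) eq by simp
  finally show ?thesis .
next
  case False
  then have "k \<le> 0" by simp
  then show ?thesis
    by (cases "k = 0") (simp_all add: es_neg)
qed

end



context plac
begin

lemma PASSW:
  "sorted_wrt (\<lambda>x y. lt y x) w \<Longrightarrow> set w \<subseteq> P \<Longrightarrow> d \<in> P \<Longrightarrow> c \<in> P \<Longrightarrow>
   \<forall>x\<in>set w. lt x d \<and> lt x c \<and> \<not> lt c x \<Longrightarrow> \<not> lt c d \<Longrightarrow>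
   L d * mono w * L c \<approx> L d * L c * mono w"
proof (induction w arbitrary: d)
  case Nil
  then show ?case by simp
next
  case (Cons x w)
  have ih: "L x * mono w * L c \<approx> L x * L c * mono w"
    using Cons.prems by (intro Cons.IH) auto
  have "L d * mono (x # w) * L c = L d * (L x * mono w * L c)"
    by (simp add: mono_Cons mult.assoc)
  also have "\<dots> \<approx> L d * (L x * L c * mono w)"
    by (rule eqv_lmult[OF ih])
  also have "\<dots> = 1 * L d * L x * L c * mono w" by (simp add: mult.assoc)
  also have "\<dots> \<approx> 1 * L d * L c * L x * mono w"
    using Cons.prems by (intro G1) auto
  also have "\<dots> = L d * L c * mono (x # w)" by (simp add: mono_Cons mult.assoc)
  finally show ?case .
qed

lemma PASS:
  assumes "R \<subseteq> P" "d \<in> P" "c \<in> P" "\<forall>x\<in>R. lt x d \<and> lt x c \<and> \<not> lt c x" "\<not> lt c d"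
  shows "L d * es R j * L c \<approx> L d * L c * es R j"
proof (cases "j < 0")
  case True
  then show ?thesis by (simp add: es_neg)
next
  case False
  have "L d * es R j * L c = (\<Sum>w\<in>chains R (nat j). L d * mono w * L c)"
    using False by (simp add: es_def sum_distrib_left sum_distrib_right)
  also have "\<dots> \<approx> (\<Sum>w\<in>chains R (nat j). L d * L c * mono w)"
  proof (rule eqv_sum)
    fix w assume "w \<in> chains R (nat j)"
    then have "sorted_wrt (\<lambda>x y. lt y x) w" "set w \<subseteq> R" by (auto simp: chains_def)
    then show "L d * mono w * L c \<approx> L d * L c * mono w"
      using assms by (intro PASSW) auto
  qed
  also have "\<dots> = L d * L c * es R j"
    using False by (simp add: es_def sum_distrib_left)
  finally show ?thesis .
qed

end



context plac
begin

lemma KILL: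
  assumes "d \<in> P" "u \<in> P" "x \<in> P" "\<not> lt x d" "lt x u" "lt d u"
  shows "(L d * L u - L u * L d) * L x * Y \<approx> 0"
proof -
  have "1 * L u * L d * L x * Y \<approx> 1 * L d * L u * L x * Y"
    using assms by (intro G2) auto
  then have "L d * L u * L x * Y \<approx> L u * L d * L x * Y" by (simp add: eqv_sym)
  then have "L d * L u * L x * Y - L u * L d * L x * Y \<approx> L u * L d * L x * Y - L u * L d * L x * Y"
    by (rule eqv_diff) simp
  then show ?thesis by (simp add: algebra_simps)
qed

context
  fixes S u
  assumes finS: "finite S" and SP: "S \<subseteq> P" and uS: "u \<in> S" and umax: "\<forall>x\<in>S - {u}. lt x u"
begin

lemma uP: "u \<in> P" using SP uS by blast

lemma Kmax:
  "es (S - {u}) k * L u \<approx> L u * es (S - {u}) k +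
     (\<Sum>d\<in>S - {u}. L d * L u - L u * L d) * es (S - {u}) (k - 1)"
proof -
  let ?Sp = "S - {u}"
  have finSp: "finite ?Sp" using finS by simp
  consider "k < 0" | "k = 0" | "k \<ge> 1" by linarith
  then show ?thesis
  proof cases
    case 1 then show ?thesis by (simp add: es_neg)
  next
    case 2 then show ?thesis by (simp add: es_neg)
  next
    case 3
    define E where "E d = es {x\<in>?Sp. lt x d} (k - 1)" for d
    have f1: "es ?Sp k = (\<Sum>d\<in>?Sp. L d * E d)"
      unfolding E_def by (rule FIRST[OF finSp 3])
    have step1: "es ?Sp k * L u \<approx> (\<Sum>d\<in>?Sp. L d * L u * E d)"
    proof -
      have "es ?Sp k * L u = (\<Sum>d\<in>?Sp. L d * E d * L u)"
        by (simp add: f1 sum_distrib_right)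
      also have "\<dots> \<approx> (\<Sum>d\<in>?Sp. L d * L u * E d)"
      proof (rule eqv_sum)
        fix d assume d: "d \<in> ?Sp"
        show "L d * E d * L u \<approx> L d * L u * E d"
          unfolding E_def
        proof (rule PASS)
          show "{x \<in> ?Sp. lt x d} \<subseteq> P" using SP by auto
          show "d \<in> P" using d SP by auto
          show "u \<in> P" by (rule uP)
          show "\<forall>x\<in>{x \<in> ?Sp. lt x d}. lt x d \<and> lt x u \<and> \<not> lt u x"
            using umax SP uP asy by blast
          show "\<not> lt u d" using umax d SP uP asy by blast
        qed
      qed
      finally show ?thesis .
    qed
    have step2: "(\<Sum>d\<in>?Sp. L d * L u * E d) = L u * es ?Sp k + (\<Sum>d\<in>?Sp. (L d * L u - L u * L d) * E d)"
      by (simp add: f1 sum_distrib_left algebra_simps sum.distrib[symmetric] sum_subtractf[symmetric] mult.assoc)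
    have step3: "(\<Sum>d\<in>?Sp. (L d * L u - L u * L d) * E d) \<approx>
                 (\<Sum>d\<in>?Sp. (L d * L u - L u * L d) * es ?Sp (k - 1))"
    proof (rule eqv_sum)
      fix d assume d: "d \<in> ?Sp"
      have dP: "d \<in> P" using d SP by auto
      show "(L d * L u - L u * L d) * E d \<approx> (L d * L u - L u * L d) * es ?Sp (k - 1)"
      proof (cases "k = 1")
        case True
        then show ?thesis by (simp add: E_def)
      next
        case False
        then have k2: "k - 1 \<ge> 1" using 3 by linarith
        define F where "F x = es {y\<in>?Sp. lt y x} (k - 1 - 1)" for x
        have "es ?Sp (k - 1) = (\<Sum>x\<in>?Sp. L x * F x)"
          unfolding F_def by (rule FIRST[OF finSp k2])
        also have "\<dots> = (\<Sum>x\<in>{x\<in>?Sp. lt x d}. L x * F x) + (\<Sum>x\<in>?Sp - {x\<in>?Sp. lt x d}. L x * F x)"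
          using sum.subset_diff[of "{x\<in>?Sp. lt x d}" ?Sp "\<lambda>x. L x * F x"] finSp by (auto simp: add.commute)
        also have "(\<Sum>x\<in>{x\<in>?Sp. lt x d}. L x * F x) = E d"
        proof -
          have "E d = (\<Sum>x\<in>{x\<in>?Sp. lt x d}. L x * es {y\<in>{x\<in>?Sp. lt x d}. lt y x} (k - 1 - 1))"
            unfolding E_def by (rule FIRST) (use finSp k2 in auto)
          also have "\<dots> = (\<Sum>x\<in>{x\<in>?Sp. lt x d}. L x * F x)"
          proof (rule sum.cong)
            fix x assume x: "x \<in> {x\<in>?Sp. lt x d}"
            have "{y\<in>{x\<in>?Sp. lt x d}. lt y x} = {y\<in>?Sp. lt y x}"
              using x SP dP trn by blast
            then show "L x * es {y\<in>{x\<in>?Sp. lt x d}. lt y x} (k - 1 - 1) = L x * F x"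
              by (simp add: F_def)
          qed simp
          finally show ?thesis by simp
        qed
        finally have dec: "es ?Sp (k - 1) = E d + (\<Sum>x\<in>?Sp - {x\<in>?Sp. lt x d}. L x * F x)" .
        have "(L d * L u - L u * L d) * (\<Sum>x\<in>?Sp - {x\<in>?Sp. lt x d}. L x * F x) \<approx> (\<Sum>x\<in>?Sp - {x\<in>?Sp. lt x d}. 0)"
          unfolding sum_distrib_left
        proof (rule eqv_sum)
          fix x assume x: "x \<in> ?Sp - {x\<in>?Sp. lt x d}"
          show "(L d * L u - L u * L d) * (L x * F x) \<approx> 0"
          proof -
            have "x \<in> P" "\<not> lt x d" "lt x u" "lt d u" using x SP umax d by auto
            then show ?thesis using KILL[of d u x "F x"] dP uP by (simp add: mult.assoc)
          qed
        qed
        then have "(L d * L u - L u * L d) * E d + (L d * L u - L u * L d) * (\<Sum>x\<in>?Sp - {x\<in>?Sp. lt x d}. L x * F x)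
                   \<approx> (L d * L u - L u * L d) * E d + 0"
          by (intro eqv_add) simp_all
        then show ?thesis using dec by (simp add: distrib_left eqv_sym)
      qed
    qed
    have "es ?Sp k * L u \<approx> L u * es ?Sp k + (\<Sum>d\<in>?Sp. (L d * L u - L u * L d) * E d)"
      using step1 step2 by simp
    also have "\<dots> \<approx> L u * es ?Sp k + (\<Sum>d\<in>?Sp. (L d * L u - L u * L d) * es ?Sp (k - 1))"
      by (intro eqv_add step3) simp
    also have "\<dots> = L u * es ?Sp k + (\<Sum>d\<in>?Sp. L d * L u - L u * L d) * es ?Sp (k - 1)"
      by (simp add: sum_distrib_right)
    finally show ?thesis .
  qed
qed

lemma Umax:
  "L u * es (S - {u}) k * L u \<approx> L u * L u * es (S - {u}) k"
proof -
  let ?Sp = "S - {u}"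
  have finSp: "finite ?Sp" using finS by simp
  consider "k < 0" | "k = 0" | "k \<ge> 1" by linarith
  then show ?thesis
  proof cases
    case 1 then show ?thesis by (simp add: es_neg)
  next
    case 2 then show ?thesis by simp
  next
    case 3
    define E where "E d = es {x\<in>?Sp. lt x d} (k - 1)" for d
    have f1: "es ?Sp k = (\<Sum>d\<in>?Sp. L d * E d)"
      unfolding E_def by (rule FIRST[OF finSp 3])
    have "L u * es ?Sp k * L u = (\<Sum>d\<in>?Sp. L u * (L d * E d * L u))"
      by (simp add: f1 sum_distrib_right sum_distrib_left mult.assoc)
    also have "\<dots> \<approx> (\<Sum>d\<in>?Sp. L u * L u * (L d * E d))"
    proof (rule eqv_sum)
      fix d assume d: "d \<in> ?Sp"
      have dP: "d \<in> P" using d SP by auto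
      have "L d * E d * L u \<approx> L d * L u * E d"
        unfolding E_def
      proof (rule PASS)
        show "{x \<in> ?Sp. lt x d} \<subseteq> P" using SP by auto
        show "d \<in> P" by (rule dP)
        show "u \<in> P" by (rule uP)
        show "\<forall>x\<in>{x \<in> ?Sp. lt x d}. lt x d \<and> lt x u \<and> \<not> lt u x"
          using umax SP uP asy by blast
        show "\<not> lt u d" using umax d SP uP asy by blast
      qed
      then have "L u * (L d * E d * L u) \<approx> L u * (L d * L u * E d)" by (rule eqv_lmult)
      also have "\<dots> = 1 * L u * L d * L u * E d" by (simp add: mult.assoc)
      also have "\<dots> \<approx> 1 * L u * L u * L d * E d"
        using dP uP umax d irr by (intro G1) auto
      also have "\<dots> = L u * L u * (L d * E d)" by (simp add: mult.assoc)
      finally show "L u * (L d * E d * L u) \<approx> L u * L u * (L d * E d)" .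
    qed
    also have "\<dots> = L u * L u * es ?Sp k"
      by (simp add: f1 sum_distrib_left)
    finally show ?thesis .
  qed
qed

lemma es_max_split: "es S k = es (S - {u}) k + L u * es (S - {u}) (k - 1)"
proof -
  have "es S k = es (S - {u}) k + (\<Sum>a\<in>{u}. L a * es {x\<in>S. lt x a} (k - 1))"
    by (rule SPLIT) (use finS uS umax SP uP asy in auto)
  moreover have "{x\<in>S. lt x u} = S - {u}" using umax uP irr by auto
  ultimately show ?thesis by simp
qed

lemma case_max:
  assumes IH: "\<And>p q. es (S - {u}) p * es (S - {u}) q \<approx> es (S - {u}) q * es (S - {u}) p"
  shows "es S p * es S q \<approx> es S q * es S p"
proof -
  define e where "e = es (S - {u})"
  define U where "U = L u"
  define M where "M = (\<Sum>d\<in>S - {u}. L d * L u - L u * L d)"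
  define \<Phi> where "\<Phi> p q = e p * e q + U * (e p * e (q - 1)) + M * (e (p - 1) * e (q - 1))
     + U * (e (p - 1) * e q) + U * U * (e (p - 1) * e (q - 1))" for p q
  have K: "\<And>k. e k * U \<approx> U * e k + M * e (k - 1)"
    unfolding e_def U_def M_def by (rule Kmax)
  have UU: "\<And>k. U * e k * U \<approx> U * U * e k"
    unfolding e_def U_def by (rule Umax)
  have IH': "\<And>p q. e p * e q \<approx> e q * e p" unfolding e_def by (rule IH)
  have ES: "\<And>k. es S k = e k + U * e (k - 1)"
    unfolding e_def U_def by (rule es_max_split)
  have expand: "es S p * es S q \<approx> \<Phi> p q" for p q
  proof -
    have "es S p * es S q = e p * e q + (e p * U) * e (q - 1) + U * (e (p - 1) * e q)
          + (U * e (p - 1) * U) * e (q - 1)"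
      by (simp add: ES algebra_simps)
    also have "\<dots> \<approx> e p * e q + (U * e p + M * e (p - 1)) * e (q - 1) + U * (e (p - 1) * e q)
          + (U * U * e (p - 1)) * e (q - 1)"
      by (intro eqv_add eqv_rmult K UU) simp_all
    also have "\<dots> = \<Phi> p q"
      by (simp add: \<Phi>_def algebra_simps)
    finally show ?thesis .
  qed
  have sym: "\<Phi> p q \<approx> \<Phi> q p"
  proof -
    have "\<Phi> p q \<approx> e q * e p + U * (e (q - 1) * e p) + M * (e (q - 1) * e (p - 1))
     + U * (e q * e (p - 1)) + U * U * (e (q - 1) * e (p - 1))"
      unfolding \<Phi>_def by (intro eqv_add eqv_lmult IH')
    also have "\<dots> = \<Phi> q p" by (simp add: \<Phi>_def algebra_simps)
    finally show ?thesis .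
  qed
  show ?thesis
    using expand[of p q] sym expand[of q p] eqv_sym eqv_trans by metis
qed

end
end



context plac
begin

lemma SUMPASS:
  assumes "R \<subseteq> P" "A \<subseteq> P" "B \<subseteq> P"
    "\<And>a b x. a \<in> A \<Longrightarrow> b \<in> B \<Longrightarrow> x \<in> R \<Longrightarrow> lt x a \<and> lt x b \<and> \<not> lt b x"
    "\<And>a b. a \<in> A \<Longrightarrow> b \<in> B \<Longrightarrow> \<not> lt b a"
  shows "(\<Sum>a\<in>A. L a) * es R i * (\<Sum>b\<in>B. L b) \<approx> (\<Sum>a\<in>A. L a) * (\<Sum>b\<in>B. L b) * es R i"
proof -
  have "(\<Sum>a\<in>A. L a) * es R i * (\<Sum>b\<in>B. L b) = (\<Sum>a\<in>A. \<Sum>b\<in>B. L a * es R i * L b)"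
    unfolding sum_distrib_right by (simp only: sum_distrib_left)
  also have "\<dots> \<approx> (\<Sum>a\<in>A. \<Sum>b\<in>B. L a * L b * es R i)"
    using assms by (intro eqv_sum PASS) auto
  also have "\<dots> = (\<Sum>a\<in>A. L a) * (\<Sum>b\<in>B. L b) * es R i"
    by (simp only: mult.assoc sum_distrib_left[symmetric] sum_distrib_right[symmetric])
  finally show ?thesis .
qed

definition "Tu S u = {x\<in>S. lt x u}"
definition "Cuv S u v = {x\<in>S. lt x u \<and> lt x v}"
definition "Au S u v = {x\<in>S. lt x u \<and> \<not> lt x v}"
definition "ap S u v k = (\<Sum>a\<in>Au S u v. L a * es {x\<in>Tu S u. lt x a} (k - 1))"

context
  fixes S u v
  assumes finS: "finite S" and SP: "S \<subseteq> P" and uS: "u \<in> S" and vS: "v \<in> S" and uv: "u \<noteq> v"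
    and umax: "\<forall>x\<in>S. \<not> lt u x" and vmax: "\<forall>x\<in>S. \<not> lt v x"
begin

lemma uP2: "u \<in> P" using SP uS by blast
lemma vP2: "v \<in> P" using SP vS by blast


lemma Au_anti: "a \<in> (Au S u v) \<Longrightarrow> x \<in> (Tu S u) \<Longrightarrow> lt a x \<Longrightarrow> False"
proof -
  assume a: "a \<in> (Au S u v)" and x: "x \<in> (Tu S u)" and ax: "lt a x"
  have aP: "a \<in> P" and xP: "x \<in> P" using a x SP by (auto simp: Au_def Tu_def)
  show False
  proof (cases "lt x v")
    case True
    then have "lt a v" using trn[OF aP xP vP2 ax] by simp
    then show False using a by (simp add: Au_def)
  next
    case False
    show False
    proof (rule no31[OF aP xP uP2 vP2 ax])
      show "lt x u" using x by (simp add: Tu_def)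
      show "v \<noteq> a" using a vmax uS by (auto simp: Au_def)
      show "v \<noteq> x" using x vmax uS by (auto simp: Tu_def)
      show "v \<noteq> u" using uv by simp
      show "incomp lt v a" using a vmax by (auto simp: incomp_def Au_def)
      show "incomp lt v x" using x vmax False by (auto simp: incomp_def Tu_def)
      show "incomp lt v u" using vmax umax uS vS by (auto simp: incomp_def)
    qed
  qed
qed

lemma Tu_split: "es (Tu S u) k = es (Cuv S u v) k + (ap S u v) k"
proof -
  have "es (Tu S u) k = es ((Tu S u) - (Au S u v)) k + (\<Sum>a\<in>(Au S u v). L a * es {x\<in>(Tu S u). lt x a} (k - 1))"
    by (rule SPLIT) (use finS Au_anti in \<open>auto simp: Tu_def Au_def\<close>)
  moreover have "(Tu S u) - (Au S u v) = (Cuv S u v)" by (auto simp: Tu_def Au_def Cuv_def)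
  ultimately show ?thesis by (simp add: ap_def)
qed

lemma YV: "L u * es (Tu S u) k * L v \<approx> L u * L v * es (Cuv S u v) k + L v * L u * (ap S u v) k"
proof -
  have c: "L u * es (Cuv S u v) k * L v \<approx> L u * L v * es (Cuv S u v) k"
  proof (rule PASS)
    show "(Cuv S u v) \<subseteq> P" using SP by (auto simp: Cuv_def)
    show "u \<in> P" by (rule uP2)
    show "v \<in> P" by (rule vP2)
    show "\<forall>x\<in>(Cuv S u v). lt x u \<and> lt x v \<and> \<not> lt v x" using SP vP2 asy by (auto simp: Cuv_def)
    show "\<not> lt v u" using vmax uS by simp
  qed
  have a: "L u * (L a * es {x\<in>(Tu S u). lt x a} (k - 1)) * L v \<approx> L v * L u * (L a * es {x\<in>(Tu S u). lt x a} (k - 1))"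
    if aA: "a \<in> (Au S u v)" for a
  proof -
    have aP: "a \<in> P" using aA SP by (auto simp: Au_def)
    have "L a * es {x\<in>(Tu S u). lt x a} (k - 1) * L v \<approx> L a * L v * es {x\<in>(Tu S u). lt x a} (k - 1)"
    proof (rule PASS)
      show "{x\<in>(Tu S u). lt x a} \<subseteq> P" using SP by (auto simp: Tu_def)
      show "a \<in> P" by (rule aP)
      show "v \<in> P" by (rule vP2)
      show "\<forall>x\<in>{x\<in>(Tu S u). lt x a}. lt x a \<and> lt x v \<and> \<not> lt v x"
      proof
        fix x assume x: "x \<in> {x\<in>(Tu S u). lt x a}"
        have "x \<notin> (Au S u v)" using Au_anti[of x a] x aA by (auto simp: Au_def Tu_def)
        then have "lt x v" using x by (auto simp: Au_def Tu_def)
        then show "lt x a \<and> lt x v \<and> \<not> lt v x" using x asy vP2 SP by (auto simp: Tu_def)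
      qed
      show "\<not> lt v a" using vmax aA by (auto simp: Au_def)
    qed
    then have "L u * (L a * es {x\<in>(Tu S u). lt x a} (k - 1) * L v) \<approx> L u * (L a * L v * es {x\<in>(Tu S u). lt x a} (k - 1))"
      by (rule eqv_lmult)
    also have "\<dots> = 1 * L u * L a * L v * es {x\<in>(Tu S u). lt x a} (k - 1)" by (simp add: mult.assoc)
    also have "\<dots> \<approx> 1 * L v * L u * L a * es {x\<in>(Tu S u). lt x a} (k - 1)"
    proof (rule G3)
      show "a \<in> P" "v \<in> P" "u \<in> P" using aP vP2 uP2 by auto
      show "incomp lt a v" using aA vmax by (auto simp: incomp_def Au_def)
      show "incomp lt v u" using vmax umax uS vS by (auto simp: incomp_def)
      show "lt a u" using aA by (simp add: Au_def)
    qed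
    finally show ?thesis by (simp add: mult.assoc)
  qed
  have apx: "L u * ap S u v k * L v = (\<Sum>a\<in>(Au S u v). L u * (L a * es {x\<in>(Tu S u). lt x a} (k - 1)) * L v)"
    unfolding ap_def by (simp only: sum_distrib_left sum_distrib_right)
  have e1: "L u * es (Tu S u) k * L v = L u * es (Cuv S u v) k * L v + (\<Sum>a\<in>(Au S u v). L u * (L a * es {x\<in>(Tu S u). lt x a} (k - 1)) * L v)"
    by (simp only: Tu_split distrib_left distrib_right apx)
  have e2: "L u * es (Cuv S u v) k * L v + (\<Sum>a\<in>(Au S u v). L u * (L a * es {x\<in>(Tu S u). lt x a} (k - 1)) * L v)
     \<approx> L u * L v * es (Cuv S u v) k + (\<Sum>a\<in>(Au S u v). L v * L u * (L a * es {x\<in>(Tu S u). lt x a} (k - 1)))"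
    by (intro eqv_add c eqv_sum a)
  have e3: "L u * L v * es (Cuv S u v) k + (\<Sum>a\<in>(Au S u v). L v * L u * (L a * es {x\<in>(Tu S u). lt x a} (k - 1)))
     = L u * L v * es (Cuv S u v) k + L v * L u * (ap S u v) k"
    unfolding ap_def by (simp only: sum_distrib_left)
  show ?thesis using eqv_trans[OF eqv_eq[OF e1] eqv_trans[OF e2 eqv_eq[OF e3]]] .
qed

lemma F2: "a \<in> (Au S u v) \<Longrightarrow> b \<in> S \<Longrightarrow> lt b v \<Longrightarrow> \<not> lt b u \<Longrightarrow> x \<in> S \<Longrightarrow> lt x b \<Longrightarrow> lt x a"
proof (rule ccontr)
  assume a: "a \<in> (Au S u v)" and b: "b \<in> S" "lt b v" "\<not> lt b u" and x: "x \<in> S" "lt x b" and nxa: "\<not> lt x a"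
  have aP: "a \<in> P" and bP: "b \<in> P" and xP: "x \<in> P" using a b x SP by (auto simp: Au_def)
  have au: "lt a u" and nav: "\<not> lt a v" using a by (auto simp: Au_def)
  show False
  proof (rule no31[OF xP bP vP2 aP x(2) b(2)])
    show "a \<noteq> x" using x b nav trn[OF xP bP vP2] by auto
    show "a \<noteq> b" using au b by auto
    show "a \<noteq> v" using au vmax uS by auto
    have "\<not> lt a x" using trn[OF aP xP bP] trn[OF aP bP vP2] x b nav by blast
    then show "incomp lt a x" using nxa by (simp add: incomp_def)
    have "\<not> lt b a" using trn[OF bP aP uP2] au b by blast
    moreover have "\<not> lt a b" using trn[OF aP bP vP2] b nav by blast
    ultimately show "incomp lt a b" by (simp add: incomp_def)
    show "incomp lt a v" using nav vmax a by (auto simp: incomp_def Au_def)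
  qed
qed

end

end



context plac
begin

lemma Cuv_sym: "Cuv S v u = Cuv S u v"
  by (auto simp: Cuv_def)

lemma eqv_trans3: "a = b \<Longrightarrow> b \<approx> c \<Longrightarrow> c = d \<Longrightarrow> a \<approx> d"
  by simp

lemma DECOMP:
  assumes finS: "finite S" and uS: "u \<in> S" and vS: "v \<in> S" and uv: "u \<noteq> v"
    and umax: "\<forall>x\<in>S. \<not> lt u x" and vmax: "\<forall>x\<in>S. \<not> lt v x"
  shows "es S k = es (S - {u, v}) k + L u * es (Tu S u) (k - 1) + L v * es (Tu S v) (k - 1)"
    and "es (S - {v}) k = es (S - {u, v}) k + L u * es (Tu S u) (k - 1)"
    and "es (S - {u}) k = es (S - {u, v}) k + L v * es (Tu S v) (k - 1)"
proof -
  have "es S k = es (S - {u, v}) k + (\<Sum>a\<in>{u, v}. L a * es {x\<in>S. lt x a} (k - 1))"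
    by (rule SPLIT) (use finS uS vS umax vmax in auto)
  then show "es S k = es (S - {u, v}) k + L u * es (Tu S u) (k - 1) + L v * es (Tu S v) (k - 1)"
    using uv by (simp add: Tu_def add.assoc)
next
  have "es (S - {v}) k = es (S - {v} - {u}) k + (\<Sum>a\<in>{u}. L a * es {x\<in>S - {v}. lt x a} (k - 1))"
    by (rule SPLIT) (use finS uS uv umax in auto)
  moreover have "S - {v} - {u} = S - {u, v}" by auto
  moreover have "{x\<in>S - {v}. lt x u} = Tu S u" using vmax uS by (auto simp: Tu_def)
  ultimately show "es (S - {v}) k = es (S - {u, v}) k + L u * es (Tu S u) (k - 1)" by simp
next
  have "es (S - {u}) k = es (S - {u} - {v}) k + (\<Sum>a\<in>{v}. L a * es {x\<in>S - {u}. lt x a} (k - 1))"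
    by (rule SPLIT) (use finS vS uv vmax in auto)
  moreover have "S - {u} - {v} = S - {u, v}" by auto
  moreover have "{x\<in>S - {u}. lt x v} = Tu S v" using umax vS by (auto simp: Tu_def)
  ultimately show "es (S - {u}) k = es (S - {u, v}) k + L v * es (Tu S v) (k - 1)" by simp
qed

lemma CROSS:
  assumes finS: "finite S" and uS: "u \<in> S" and vS: "v \<in> S" and uv: "u \<noteq> v"
    and umax: "\<forall>x\<in>S. \<not> lt u x" and vmax: "\<forall>x\<in>S. \<not> lt v x"
    and I0: "\<And>p q. es S p * es S q \<approx> es S q * es S p"
    and I1: "\<And>p q. es (S - {v}) p * es (S - {v}) q \<approx> es (S - {v}) q * es (S - {v}) p"
    and I2: "\<And>p q. es (S - {u}) p * es (S - {u}) q \<approx> es (S - {u}) q * es (S - {u}) p"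
    and I3: "\<And>p q. es (S - {u, v}) p * es (S - {u, v}) q \<approx> es (S - {u, v}) q * es (S - {u, v}) p"
  shows "(L u * es (Tu S u) (p - 1)) * (L v * es (Tu S v) (q - 1)) + (L v * es (Tu S v) (p - 1)) * (L u * es (Tu S u) (q - 1))
       \<approx> (L u * es (Tu S u) (q - 1)) * (L v * es (Tu S v) (p - 1)) + (L v * es (Tu S v) (q - 1)) * (L u * es (Tu S u) (p - 1))"
proof -
  define X where "X k = es (S - {u, v}) k" for k
  define Y where "Y k = L u * es (Tu S u) (k - 1)" for k
  define Z where "Z k = L v * es (Tu S v) (k - 1)" for k
  note D = DECOMP[OF finS uS vS uv umax vmax]
  have hS: "es S k = X k + Y k + Z k" for k using D(1) by (simp add: X_def Y_def Z_def)
  have hS1: "es (S - {v}) k = X k + Y k" for k using D(2) by (simp add: X_def Y_def)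
  have hS2: "es (S - {u}) k = X k + Z k" for k using D(3) by (simp add: X_def Z_def)
  have e1: "Y p * Z q + Z p * Y q = es S p * es S q - es (S - {v}) p * es (S - {v}) q
      - es (S - {u}) p * es (S - {u}) q + X p * X q"
    by (simp add: hS hS1 hS2 algebra_simps)
  have e2: "es S p * es S q - es (S - {v}) p * es (S - {v}) q
      - es (S - {u}) p * es (S - {u}) q + X p * X q \<approx>
      es S q * es S p - es (S - {v}) q * es (S - {v}) p
      - es (S - {u}) q * es (S - {u}) p + X q * X p"
    unfolding X_def by (intro eqv_add eqv_diff I0 I1 I2 I3)
  have e3: "es S q * es S p - es (S - {v}) q * es (S - {v}) p
      - es (S - {u}) q * es (S - {u}) p + X q * X p = Y q * Z p + Z q * Y p"
    by (simp add: hS hS1 hS2 algebra_simps)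
  have "Y p * Z q + Z p * Y q \<approx> Y q * Z p + Z q * Y p"
    by (rule eqv_trans3[OF e1 e2 e3])
  then show ?thesis by (simp add: Y_def Z_def)
qed

lemma PAIRSUM:
  assumes "finite A"
    and "\<And>a. a \<in> A \<Longrightarrow> f a a \<approx> g a a"
    and "\<And>a b. a \<in> A \<Longrightarrow> b \<in> A \<Longrightarrow> a \<noteq> b \<Longrightarrow> f a b + f b a \<approx> g a b + g b a"
  shows "(\<Sum>a\<in>A. \<Sum>b\<in>A. f a b) \<approx> (\<Sum>a\<in>A. \<Sum>b\<in>A. g a b)"
  using assms
proof (induction A rule: finite_induct)
  case empty
  then show ?case by simp
next
  case (insert c F)
  have split: "(\<Sum>a\<in>insert c F. \<Sum>b\<in>insert c F. h a b) =
      h c c + (\<Sum>b\<in>F. h c b + h b c) + (\<Sum>a\<in>F. \<Sum>b\<in>F. h a b)" for h :: "_ \<Rightarrow> _ \<Rightarrow> 'a RR"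
    using insert(1,2) by (simp add: sum.distrib algebra_simps)
  have ih: "(\<Sum>a\<in>F. \<Sum>b\<in>F. f a b) \<approx> (\<Sum>a\<in>F. \<Sum>b\<in>F. g a b)"
    using insert by auto
  have d: "f c c \<approx> g c c" using insert by auto
  have m: "(\<Sum>b\<in>F. f c b + f b c) \<approx> (\<Sum>b\<in>F. g c b + g b c)"
  proof (rule eqv_sum)
    fix b assume "b \<in> F"
    then show "f c b + f b c \<approx> g c b + g b c" using insert by auto
  qed
  show ?case unfolding split by (intro eqv_add d m ih)
qed


lemma AA:
  assumes finS: "finite S" and SP: "S \<subseteq> P" and uS: "u \<in> S" and vS: "v \<in> S" and uv: "u \<noteq> v"
    and umax: "\<forall>x\<in>S. \<not> lt u x" and vmax: "\<forall>x\<in>S. \<not> lt v x"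
    and IH: "\<And>T p q. T \<subset> S \<Longrightarrow> es T p * es T q \<approx> es T q * es T p"
  shows "ap S u v i * ap S u v j \<approx> ap S u v j * ap S u v i"
proof -
  define A where "A = Au S u v"
  define Za where "Za a = {x\<in>Tu S u. lt x a}" for a
  have uP: "u \<in> P" using uS SP by auto
  have TuS: "Tu S u \<subset> S" using uS uP irr by (auto simp: Tu_def)
  have finA: "finite A" using finS by (simp add: A_def Au_def)
  have AP: "A \<subseteq> P" using SP by (auto simp: A_def Au_def)
  have ZaTu: "Za a \<subseteq> Tu S u" for a by (auto simp: Za_def)
  have TuP: "Tu S u \<subseteq> P" using SP by (auto simp: Tu_def)
  have ATu: "A \<subseteq> Tu S u" by (auto simp: A_def Au_def Tu_def)
  have anti: "\<And>a x. a \<in> A \<Longrightarrow> x \<in> Tu S u \<Longrightarrow> lt a x \<Longrightarrow> False"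
    unfolding A_def by (rule Au_anti[OF finS SP uS vS uv umax vmax])
  have apdef: "ap S u v k = (\<Sum>a\<in>A. L a * es (Za a) (k - 1))" for k
    by (simp add: ap_def A_def Za_def)
  define f where "f a b = (L a * es (Za a) (i - 1)) * (L b * es (Za b) (j - 1))" for a b
  define g where "g a b = (L a * es (Za a) (j - 1)) * (L b * es (Za b) (i - 1))" for a b
  have l: "ap S u v i * ap S u v j = (\<Sum>a\<in>A. \<Sum>b\<in>A. f a b)"
    by (simp add: apdef f_def sum_product)
  have r: "ap S u v j * ap S u v i = (\<Sum>a\<in>A. \<Sum>b\<in>A. g a b)"
    by (simp add: apdef g_def sum_product)
  have diag: "f a a \<approx> g a a" if a: "a \<in> A" for a
  proof -
    have aP: "a \<in> P" using a AP by auto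
    have ZP: "Za a \<subseteq> P" using ZaTu TuP by blast
    have pass: "L a * es (Za a) k * L a \<approx> L a * L a * es (Za a) k" for k
    proof (rule PASS[OF ZP aP aP])
      show "\<forall>x\<in>Za a. lt x a \<and> lt x a \<and> \<not> lt a x"
        using ZP aP asy by (auto simp: Za_def)
      show "\<not> lt a a" using irr aP by blast
    qed
    have ZS: "Za a \<subset> S" using ZaTu TuS by blast
    have s1: "f a a = (L a * es (Za a) (i - 1) * L a) * es (Za a) (j - 1)"
      by (simp add: f_def mult.assoc)
    have s2: "(L a * es (Za a) (i - 1) * L a) * es (Za a) (j - 1) \<approx> L a * L a * (es (Za a) (i - 1) * es (Za a) (j - 1))"
      using eqv_rmult[OF pass[of "i - 1"], of "es (Za a) (j - 1)"] by (simp add: mult.assoc)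
    have s3: "L a * L a * (es (Za a) (i - 1) * es (Za a) (j - 1)) \<approx> L a * L a * (es (Za a) (j - 1) * es (Za a) (i - 1))"
      by (rule eqv_lmult[OF IH[OF ZS]])
    have s4: "L a * L a * (es (Za a) (j - 1) * es (Za a) (i - 1)) \<approx> (L a * es (Za a) (j - 1) * L a) * es (Za a) (i - 1)"
      using eqv_sym[OF eqv_rmult[OF pass[of "j - 1"], of "es (Za a) (i - 1)"]] by (simp add: mult.assoc)
    have s5: "(L a * es (Za a) (j - 1) * L a) * es (Za a) (i - 1) = g a a"
      by (simp add: g_def mult.assoc)
    show ?thesis
      by (rule eqv_trans3[OF s1 eqv_trans[OF s2 eqv_trans[OF s3 s4]] s5])
  qed
  have off: "f a b + f b a \<approx> g a b + g b a" if a: "a \<in> A" and b: "b \<in> A" and ab: "a \<noteq> b" for a b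
  proof -
    define Sab where "Sab = {a, b} \<union> Za a \<union> Za b"
    have SabTu: "Sab \<subseteq> Tu S u" using a b ATu ZaTu by (auto simp: Sab_def)
    have sub: "T \<subseteq> Sab \<Longrightarrow> T \<subset> S" for T using SabTu TuS by blast
    have finSab: "finite Sab" using finite_subset[OF SabTu] finS TuS finite_subset by blast
    have aP: "a \<in> P" and bP: "b \<in> P" using a b AP by auto
    have Tua: "Tu Sab a = Za a"
    proof
      show "Tu Sab a \<subseteq> Za a"
      proof
        fix x assume x: "x \<in> Tu Sab a"
        then have xa: "lt x a" and xS: "x \<in> Sab" by (auto simp: Tu_def)
        have "x \<noteq> a" using xa irr aP by blast
        moreover have "x \<noteq> b" using xa anti[OF b] a ATu by blast
        ultimately have "x \<in> Za a \<or> x \<in> Za b" using xS by (auto simp: Sab_def)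
        then show "x \<in> Za a"
        proof
          assume "x \<in> Za b"
          then have "x \<in> Tu S u" by (auto simp: Za_def)
          then show "x \<in> Za a" using xa by (simp add: Za_def)
        qed
      qed
      show "Za a \<subseteq> Tu Sab a" by (auto simp: Tu_def Sab_def Za_def)
    qed
    have Tub: "Tu Sab b = Za b"
    proof
      show "Tu Sab b \<subseteq> Za b"
      proof
        fix x assume x: "x \<in> Tu Sab b"
        then have xb: "lt x b" and xS: "x \<in> Sab" by (auto simp: Tu_def)
        have "x \<noteq> b" using xb irr bP by blast
        moreover have "x \<noteq> a" using xb anti[OF a] b ATu by blast
        ultimately have "x \<in> Za a \<or> x \<in> Za b" using xS by (auto simp: Sab_def)
        then show "x \<in> Za b"
        proof
          assume "x \<in> Za a"
          then have "x \<in> Tu S u" by (auto simp: Za_def)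
          then show "x \<in> Za b" using xb by (simp add: Za_def)
        qed
      qed
      show "Za b \<subseteq> Tu Sab b" by (auto simp: Tu_def Sab_def Za_def)
    qed
    have amax: "\<forall>x\<in>Sab. \<not> lt a x"
    proof
      fix x assume x: "x \<in> Sab"
      have xP: "x \<in> P" using x SabTu TuP by blast
      show "\<not> lt a x"
      proof
        assume ax: "lt a x"
        have "x \<in> Tu S u" using x SabTu by blast
        then show False using anti[OF a _ ax] by blast
      qed
    qed
    have bmax: "\<forall>x\<in>Sab. \<not> lt b x"
    proof
      fix x assume x: "x \<in> Sab"
      show "\<not> lt b x"
      proof
        assume bx: "lt b x"
        have "x \<in> Tu S u" using x SabTu by blast
        then show False using anti[OF b _ bx] by blast
      qed
    qed
    have cr: "(L a * es (Tu Sab a) (i - 1)) * (L b * es (Tu Sab b) (j - 1)) + (L b * es (Tu Sab b) (i - 1)) * (L a * es (Tu Sab a) (j - 1))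
       \<approx> (L a * es (Tu Sab a) (j - 1)) * (L b * es (Tu Sab b) (i - 1)) + (L b * es (Tu Sab b) (j - 1)) * (L a * es (Tu Sab a) (i - 1))"
    proof (rule CROSS[OF finSab _ _ ab amax bmax])
      show "a \<in> Sab" "b \<in> Sab" by (auto simp: Sab_def)
      show "\<And>p q. es Sab p * es Sab q \<approx> es Sab q * es Sab p" by (rule IH[OF sub]) simp
      show "\<And>p q. es (Sab - {b}) p * es (Sab - {b}) q \<approx> es (Sab - {b}) q * es (Sab - {b}) p" by (rule IH[OF sub]) auto
      show "\<And>p q. es (Sab - {a}) p * es (Sab - {a}) q \<approx> es (Sab - {a}) q * es (Sab - {a}) p" by (rule IH[OF sub]) auto
      show "\<And>p q. es (Sab - {a, b}) p * es (Sab - {a, b}) q \<approx> es (Sab - {a, b}) q * es (Sab - {a, b}) p" by (rule IH[OF sub]) auto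
    qed
    then show ?thesis unfolding Tua Tub f_def g_def .
  qed
  have "(\<Sum>a\<in>A. \<Sum>b\<in>A. f a b) \<approx> (\<Sum>a\<in>A. \<Sum>b\<in>A. g a b)"
    by (rule PAIRSUM[OF finA diag off])
  then show ?thesis unfolding l r .
qed

lemma case_two:
  assumes finS: "finite S" and SP: "S \<subseteq> P" and uS: "u \<in> S" and vS: "v \<in> S" and uv: "u \<noteq> v"
    and umax: "\<forall>x\<in>S. \<not> lt u x" and vmax: "\<forall>x\<in>S. \<not> lt v x"
    and IH: "\<And>T p q. T \<subset> S \<Longrightarrow> es T p * es T q \<approx> es T q * es T p"
  shows "es S p * es S q \<approx> es S q * es S p"
proof -
  have uP: "u \<in> P" and vP: "v \<in> P" using SP uS vS by auto
  define c where "c = es (Cuv S u v)"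
  define a' where "a' = ap S u v"
  define b' where "b' = ap S v u"
  have gu: "es (Tu S u) k = c k + a' k" for k
    unfolding c_def a'_def by (rule Tu_split[OF finS SP uS vS uv umax vmax])
  have gv: "es (Tu S v) k = c k + b' k" for k
    using Tu_split[OF finS SP vS uS uv[symmetric] vmax umax, of k] unfolding c_def b'_def Cuv_sym[of S v u] .
  have YVu: "L u * es (Tu S u) k * L v \<approx> L u * L v * c k + L v * L u * a' k" for k
    unfolding c_def a'_def by (rule YV[OF finS SP uS vS uv umax vmax])
  have YVv: "L v * es (Tu S v) k * L u \<approx> L v * L u * c k + L u * L v * b' k" for k
    using YV[OF finS SP vS uS uv[symmetric] vmax umax, of k] unfolding c_def b'_def Cuv_sym[of S v u] .
  have FTu: "(c i + a' i) * (c j + a' j) \<approx> (c j + a' j) * (c i + a' i)" for i j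
  proof -
    have "Tu S u \<subset> S" using uS uP irr by (auto simp: Tu_def)
    from IH[OF this] show ?thesis unfolding gu .
  qed
  have FTv: "(c i + b' i) * (c j + b' j) \<approx> (c j + b' j) * (c i + b' i)" for i j
  proof -
    have "Tu S v \<subset> S" using vS vP irr by (auto simp: Tu_def)
    from IH[OF this] show ?thesis unfolding gv .
  qed
  have FAA: "a' i * a' j \<approx> a' j * a' i" for i j
    unfolding a'_def by (rule AA[OF finS SP uS vS uv umax vmax IH])
  have FBB: "b' i * b' j \<approx> b' j * b' i" for i j
    unfolding b'_def by (rule AA[OF finS SP vS uS uv[symmetric] vmax umax IH])
  have Fmix: "a' i * b' j \<approx> a' j * b' i \<and> b' i * a' j \<approx> b' j * a' i" for i j
  proof (cases "Au S u v = {} \<or> Au S v u = {}")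
    case True
    then have "(\<forall>k. a' k = 0) \<or> (\<forall>k. b' k = 0)" by (auto simp: a'_def b'_def ap_def)
    then show ?thesis by auto
  next
    case False
    then obtain a0 b0 where a0: "a0 \<in> Au S u v" and b0: "b0 \<in> Au S v u" by blast
    define Zs where "Zs = {x\<in>S. lt x a0}"
    have a0P: "a0 \<in> P" using a0 SP by (auto simp: Au_def)
    have F2uv: "\<And>a b x. a \<in> Au S u v \<Longrightarrow> b \<in> S \<Longrightarrow> lt b v \<Longrightarrow> \<not> lt b u \<Longrightarrow> x \<in> S \<Longrightarrow> lt x b \<Longrightarrow> lt x a"
      by (rule F2[OF finS SP uS vS uv umax vmax])
    have F2vu: "\<And>a b x. a \<in> Au S v u \<Longrightarrow> b \<in> S \<Longrightarrow> lt b u \<Longrightarrow> \<not> lt b v \<Longrightarrow> x \<in> S \<Longrightarrow> lt x b \<Longrightarrow> lt x a"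
      by (rule F2[OF finS SP vS uS uv[symmetric] vmax umax])
    have eqA: "{x\<in>S. lt x a} = {x\<in>S. lt x b}" if a: "a \<in> Au S u v" and b: "b \<in> Au S v u" for a b
      using F2uv[OF a] F2vu[OF b] a b by (auto simp: Au_def)
    have ZA: "{x\<in>Tu S u. lt x a} = Zs" if a: "a \<in> Au S u v" for a
    proof -
      have aP': "a \<in> P" and au: "lt a u" using a SP by (auto simp: Au_def)
      have "{x\<in>Tu S u. lt x a} = {x\<in>S. lt x a}"
        unfolding Tu_def using SP aP' uP au by (blast intro: trn)
      also have "\<dots> = {x\<in>S. lt x b0}" by (rule eqA[OF a b0])
      also have "\<dots> = Zs" unfolding Zs_def using eqA[OF a0 b0] by simp
      finally show ?thesis .
    qed
    have ZB: "{x\<in>Tu S v. lt x b} = Zs" if b: "b \<in> Au S v u" for b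
    proof -
      have bP': "b \<in> P" and bv: "lt b v" using b SP by (auto simp: Au_def)
      have "{x\<in>Tu S v. lt x b} = {x\<in>S. lt x b}"
        unfolding Tu_def using SP bP' vP bv by (blast intro: trn)
      also have "\<dots> = Zs" unfolding Zs_def using eqA[OF a0 b] by simp
      finally show ?thesis .
    qed
    define \<alpha> where "\<alpha> = (\<Sum>a\<in>Au S u v. L a)"
    define \<beta> where "\<beta> = (\<Sum>b\<in>Au S v u. L b)"
    define z where "z = es Zs"
    have a'z: "a' k = \<alpha> * z (k - 1)" for k
      unfolding a'_def ap_def \<alpha>_def z_def by (simp add: ZA sum_distrib_right)
    have b'z: "b' k = \<beta> * z (k - 1)" for k
      unfolding b'_def ap_def \<beta>_def z_def by (simp add: ZB sum_distrib_right)
    have ZsP: "Zs \<subseteq> P" using SP by (auto simp: Zs_def)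
    have inZ: "x \<in> Zs \<Longrightarrow> a \<in> Au S u v \<Longrightarrow> lt x a" for x a
      using ZA by (auto simp: Tu_def)
    have inZ': "x \<in> Zs \<Longrightarrow> b \<in> Au S v u \<Longrightarrow> lt x b" for x b
      using ZB by (auto simp: Tu_def)
    have AP: "Au S u v \<subseteq> P" "Au S v u \<subseteq> P" using SP by (auto simp: Au_def)
    have ab: "\<alpha> * z k * \<beta> \<approx> \<alpha> * \<beta> * z k" for k
      unfolding \<alpha>_def \<beta>_def z_def
    proof (rule SUMPASS[OF ZsP AP])
      fix a b x assume a: "a \<in> Au S u v" and b: "b \<in> Au S v u" and x: "x \<in> Zs"
      have xb: "lt x b" by (rule inZ'[OF x b])
      have "x \<in> P" "b \<in> P" using x b ZsP AP by auto
      then have "\<not> lt b x" using asy xb by blast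
      then show "lt x a \<and> lt x b \<and> \<not> lt b x"
        using inZ[OF x a] xb by blast
    next
      fix a b assume a: "a \<in> Au S u v" and b: "b \<in> Au S v u"
      have "a \<in> P" "b \<in> P" "lt a u" "\<not> lt b u" using a b AP by (auto simp: Au_def)
      then show "\<not> lt b a" using trn[of b a u] uP by blast
    qed
    have ba: "\<beta> * z k * \<alpha> \<approx> \<beta> * \<alpha> * z k" for k
      unfolding \<alpha>_def \<beta>_def z_def
    proof (rule SUMPASS[OF ZsP AP(2) AP(1)])
      fix a b x assume a: "a \<in> Au S v u" and b: "b \<in> Au S u v" and x: "x \<in> Zs"
      have xb: "lt x b" by (rule inZ[OF x b])
      have "x \<in> P" "b \<in> P" using x b ZsP AP by auto
      then have "\<not> lt b x" using asy xb by blast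
      then show "lt x a \<and> lt x b \<and> \<not> lt b x"
        using inZ'[OF x a] xb by blast
    next
      fix a b assume a: "a \<in> Au S v u" and b: "b \<in> Au S u v"
      have "a \<in> P" "b \<in> P" "lt a v" "\<not> lt b v" using a b AP by (auto simp: Au_def)
      then show "\<not> lt b a" using trn[of b a v] vP by blast
    qed
    have Zsub: "Zs \<subset> S" using a0 a0P irr by (auto simp: Zs_def Au_def)
    have IHZ: "z k * z l \<approx> z l * z k" for k l
      unfolding z_def by (rule IH[OF Zsub])
    have m1: "a' i * b' j \<approx> a' j * b' i"
    proof -
      have e1: "a' i * b' j = (\<alpha> * z (i - 1) * \<beta>) * z (j - 1)" by (simp add: a'z b'z mult.assoc)
      have e2: "(\<alpha> * z (i - 1) * \<beta>) * z (j - 1) \<approx> \<alpha> * \<beta> * (z (i - 1) * z (j - 1))"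
        using eqv_rmult[OF ab[of "i - 1"], of "z (j - 1)"] by (simp add: mult.assoc)
      have e3: "\<alpha> * \<beta> * (z (i - 1) * z (j - 1)) \<approx> \<alpha> * \<beta> * (z (j - 1) * z (i - 1))"
        by (rule eqv_lmult[OF IHZ])
      have e4: "\<alpha> * \<beta> * (z (j - 1) * z (i - 1)) \<approx> (\<alpha> * z (j - 1) * \<beta>) * z (i - 1)"
        using eqv_sym[OF eqv_rmult[OF ab[of "j - 1"], of "z (i - 1)"]] by (simp add: mult.assoc)
      have e5: "(\<alpha> * z (j - 1) * \<beta>) * z (i - 1) = a' j * b' i" by (simp add: a'z b'z mult.assoc)
      show ?thesis by (rule eqv_trans3[OF e1 eqv_trans[OF e2 eqv_trans[OF e3 e4]] e5])
    qed
    have m2: "b' i * a' j \<approx> b' j * a' i"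
    proof -
      have e1: "b' i * a' j = (\<beta> * z (i - 1) * \<alpha>) * z (j - 1)" by (simp add: a'z b'z mult.assoc)
      have e2: "(\<beta> * z (i - 1) * \<alpha>) * z (j - 1) \<approx> \<beta> * \<alpha> * (z (i - 1) * z (j - 1))"
        using eqv_rmult[OF ba[of "i - 1"], of "z (j - 1)"] by (simp add: mult.assoc)
      have e3: "\<beta> * \<alpha> * (z (i - 1) * z (j - 1)) \<approx> \<beta> * \<alpha> * (z (j - 1) * z (i - 1))"
        by (rule eqv_lmult[OF IHZ])
      have e4: "\<beta> * \<alpha> * (z (j - 1) * z (i - 1)) \<approx> (\<beta> * z (j - 1) * \<alpha>) * z (i - 1)"
        using eqv_sym[OF eqv_rmult[OF ba[of "j - 1"], of "z (i - 1)"]] by (simp add: mult.assoc)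
      have e5: "(\<beta> * z (j - 1) * \<alpha>) * z (i - 1) = b' j * a' i" by (simp add: a'z b'z mult.assoc)
      show ?thesis by (rule eqv_trans3[OF e1 eqv_trans[OF e2 eqv_trans[OF e3 e4]] e5])
    qed
    show ?thesis using m1 m2 by blast
  qed
  define \<Psi> where "\<Psi> i j = (L u * L v * c i + L v * L u * a' i) * (c j + b' j)
      + (L v * L u * c i + L u * L v * b' i) * (c j + a' j)" for i j
  have Psym: "\<Psi> i j \<approx> \<Psi> j i" for i j
  proof -
    have e1: "\<Psi> i j = L u * L v * ((c i + b' i) * (c j + b' j) - b' i * b' j + b' i * a' j)
        + L v * L u * ((c i + a' i) * (c j + a' j) - a' i * a' j + a' i * b' j)"
      by (simp add: \<Psi>_def algebra_simps)
    have e2: "L u * L v * ((c i + b' i) * (c j + b' j) - b' i * b' j + b' i * a' j)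
        + L v * L u * ((c i + a' i) * (c j + a' j) - a' i * a' j + a' i * b' j)
        \<approx> L u * L v * ((c j + b' j) * (c i + b' i) - b' j * b' i + b' j * a' i)
        + L v * L u * ((c j + a' j) * (c i + a' i) - a' j * a' i + a' j * b' i)"
      using Fmix[of i j] by (intro eqv_add eqv_lmult eqv_diff FTu FTv FAA FBB) auto
    have e3: "L u * L v * ((c j + b' j) * (c i + b' i) - b' j * b' i + b' j * a' i)
        + L v * L u * ((c j + a' j) * (c i + a' i) - a' j * a' i + a' j * b' i) = \<Psi> j i"
      by (simp add: \<Psi>_def algebra_simps)
    show ?thesis by (rule eqv_trans3[OF e1 e2 e3])
  qed
  have W: "(L u * es (Tu S u) (p - 1)) * (L v * es (Tu S v) (q - 1)) + (L v * es (Tu S v) (p - 1)) * (L u * es (Tu S u) (q - 1))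
       \<approx> (L u * es (Tu S u) (q - 1)) * (L v * es (Tu S v) (p - 1)) + (L v * es (Tu S v) (q - 1)) * (L u * es (Tu S u) (p - 1))"
    (is "?l p q \<approx> ?l q p")
  proof -
    have WP: "?l p q \<approx> \<Psi> (p - 1) (q - 1)" for p q
    proof -
      have e1: "?l p q = (L u * es (Tu S u) (p - 1) * L v) * es (Tu S v) (q - 1)
          + (L v * es (Tu S v) (p - 1) * L u) * es (Tu S u) (q - 1)"
        by (simp add: mult.assoc)
      have e2: "(L u * es (Tu S u) (p - 1) * L v) * es (Tu S v) (q - 1)
          + (L v * es (Tu S v) (p - 1) * L u) * es (Tu S u) (q - 1)
          \<approx> (L u * L v * c (p - 1) + L v * L u * a' (p - 1)) * (c (q - 1) + b' (q - 1))
          + (L v * L u * c (p - 1) + L u * L v * b' (p - 1)) * (c (q - 1) + a' (q - 1))"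
        unfolding gu[of "q - 1"] gv[of "q - 1"]
        by (intro eqv_add eqv_rmult YVu YVv)
      have e3: "(L u * L v * c (p - 1) + L v * L u * a' (p - 1)) * (c (q - 1) + b' (q - 1))
          + (L v * L u * c (p - 1) + L u * L v * b' (p - 1)) * (c (q - 1) + a' (q - 1)) = \<Psi> (p - 1) (q - 1)"
        by (simp add: \<Psi>_def)
      show ?thesis by (rule eqv_trans3[OF e1 e2 e3])
    qed
    show ?thesis using eqv_trans[OF WP[of p q] eqv_trans[OF Psym eqv_sym[OF WP[of q p]]]] .
  qed
  define X where "X k = es (S - {u, v}) k" for k
  define Y where "Y k = L u * es (Tu S u) (k - 1)" for k
  define Z where "Z k = L v * es (Tu S v) (k - 1)" for k
  note D = DECOMP[OF finS uS vS uv umax vmax]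
  have hS: "es S k = X k + Y k + Z k" for k using D(1) by (simp add: X_def Y_def Z_def)
  have hS1: "es (S - {v}) k = X k + Y k" for k using D(2) by (simp add: X_def Y_def)
  have hS2: "es (S - {u}) k = X k + Z k" for k using D(3) by (simp add: X_def Z_def)
  have IH1: "(X p + Y p) * (X q + Y q) \<approx> (X q + Y q) * (X p + Y p)" for p q
    using IH[of "S - {v}" p q] vS by (auto simp: hS1)
  have IH2: "(X p + Z p) * (X q + Z q) \<approx> (X q + Z q) * (X p + Z p)" for p q
    using IH[of "S - {u}" p q] uS by (auto simp: hS2)
  have IH0: "X p * X q \<approx> X q * X p" for p q
    using IH[of "S - {u, v}" p q] uS unfolding X_def by auto
  have W': "Y p * Z q + Z p * Y q \<approx> Y q * Z p + Z q * Y p"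
    using W by (simp add: Y_def Z_def)
  have e1: "es S p * es S q = (X p + Y p) * (X q + Y q) + (X p + Z p) * (X q + Z q) - X p * X q
         + (Y p * Z q + Z p * Y q)"
    by (simp add: hS algebra_simps)
  have e2: "(X p + Y p) * (X q + Y q) + (X p + Z p) * (X q + Z q) - X p * X q
         + (Y p * Z q + Z p * Y q) \<approx> (X q + Y q) * (X p + Y p) + (X q + Z q) * (X p + Z p) - X q * X p
         + (Y q * Z p + Z q * Y p)"
    by (intro eqv_add eqv_diff IH1 IH2 IH0 W')
  have e3: "(X q + Y q) * (X p + Y p) + (X q + Z q) * (X p + Z p) - X q * X p
         + (Y q * Z p + Z q * Y p) = es S q * es S p"
    by (simp add: hS algebra_simps)
  show ?thesis by (rule eqv_trans3[OF e1 e2 e3])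
qed

end



context plac
begin

lemma es_empty: "es {} k = (if k = 0 then 1 else 0)"
proof -
  have "chains {} n = (if n = 0 then {[]} else {})" for n
    by (auto simp: chains_def)
  then show ?thesis by (auto simp: es_def)
qed

lemma EXMAX:
  assumes "finite S" "S \<subseteq> P" "y \<in> S"
  shows "\<exists>u\<in>S. (u = y \<or> lt y u) \<and> (\<forall>x\<in>S. \<not> lt u x)"
  using assms(3)
proof (induction "card {z\<in>S. lt y z}" arbitrary: y rule: less_induct)
  case less
  show ?case
  proof (cases "\<forall>x\<in>S. \<not> lt y x")
    case True
    then show ?thesis using less.prems by blast
  next
    case False
    then obtain x where x: "x \<in> S" "lt y x" by blast
    have yP: "y \<in> P" and xP: "x \<in> P" using x less.prems assms(2) by auto
    have sub: "{z\<in>S. lt x z} \<subset> {z\<in>S. lt y z}"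
    proof
      show "{z\<in>S. lt x z} \<subseteq> {z\<in>S. lt y z}"
        using x yP xP assms(2) trn by blast
      show "{z\<in>S. lt x z} \<noteq> {z\<in>S. lt y z}"
        using x irr xP by blast
    qed
    have "card {z\<in>S. lt x z} < card {z\<in>S. lt y z}"
      by (rule psubset_card_mono) (use assms(1) sub in auto)
    then obtain u where u: "u \<in> S" "u = x \<or> lt x u" "\<forall>z\<in>S. \<not> lt u z"
      using less.hyps[OF _ x(1)] by blast
    have "lt y u" using u x yP xP assms(2) trn by blast
    then show ?thesis using u by blast
  qed
qed

lemma main_comm: "finite S \<Longrightarrow> S \<subseteq> P \<Longrightarrow> es S p * es S q \<approx> es S q * es S p"
proof (induction S arbitrary: p q rule: finite_psubset_induct)
  case (psubset S)
  have IH: "\<And>T p q. T \<subset> S \<Longrightarrow> es T p * es T q \<approx> es T q * es T p"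
    using psubset by blast
  show ?case
  proof (cases "S = {}")
    case True
    then show ?thesis by (simp add: es_empty)
  next
    case False
    then obtain y where y: "y \<in> S" by blast
    obtain u where u: "u \<in> S" "\<forall>x\<in>S. \<not> lt u x"
      using EXMAX[OF psubset(1,3) y] by blast
    show ?thesis
    proof (cases "\<forall>x\<in>S - {u}. lt x u")
      case True
      have "S - {u} \<subset> S" using u by blast
      then show ?thesis
        using case_max[OF psubset(1,3) u(1) True] IH by blast
    next
      case False
      then obtain y' where y': "y' \<in> S" "y' \<noteq> u" "\<not> lt y' u" by blast
      obtain v where v: "v \<in> S" "v = y' \<or> lt y' v" "\<forall>x\<in>S. \<not> lt v x"
        using EXMAX[OF psubset(1,3) y'(1)] by blast
      have "v \<noteq> u" using v(2) y' by blast
      then show ?thesis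
        using case_two[OF psubset(1,3) u(1) v(1) _ u(2) v(3) IH] by blast
    qed
  qed
qed

lemma phi_es:
  assumes fin: "finite T"
  shows "phi (es T k) = elem_sym lt k T"
proof (rule ext)
  fix w
  show "phi (es T k) w = elem_sym lt k T w"
  proof (cases "k < 0")
    case True
    have e0: "es T k = 0" using True by (rule es_neg)
    have "phi (es T k) w = 0" unfolding e0 phi_def by (rule lookup_zero)
    moreover have "elem_sym lt k T w = 0"
    proof -
      have "int (length w) \<noteq> k" using True by linarith
      then show ?thesis unfolding elem_sym_def by simp
    qed
    ultimately show ?thesis by (simp only:)
  next
    case False
    have e1: "phi (es T k) w = (\<Sum>v\<in>chains T (nat k). if v = w then 1 else 0)"
    proof -
      have "phi (es T k) w = Poly_Mapping.lookup (\<Sum>v\<in>chains T (nat k). mono v) (W w)"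
        using False by (simp add: phi_def es_def)
      also have "\<dots> = (\<Sum>v\<in>chains T (nat k). Poly_Mapping.lookup (mono v) (W w))"
        by (rule lookup_sum)
      also have "\<dots> = (\<Sum>v\<in>chains T (nat k). if v = w then 1 else 0)"
      proof (rule sum.cong)
        fix v show "Poly_Mapping.lookup (mono v) (W w) = (if v = w then 1 else 0)"
          unfolding mono_def lookup_single when_def by auto
      qed simp
      finally show ?thesis .
    qed
    have e2: "(\<Sum>v\<in>chains T (nat k). if v = w then (1::int) else 0) = (if w \<in> chains T (nat k) then 1 else 0)"
      using finite_chains[OF fin] by (rule sum.delta)
    have e3: "(if w \<in> chains T (nat k) then (1::int) else 0) = elem_sym lt k T w"
      using False unfolding chains_def elem_sym_def by auto
    show ?thesis using e1 e2 e3 by (simp only:)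
  qed
qed

end

theorem mainTheorem1:
  fixes P :: "'a set" and lt :: "'a \<Rightarrow> 'a \<Rightarrow> bool" and k l :: int and S :: "'a set"
  assumes "finite P" and "strict_poset P lt" and "three_one_free P lt" and "S \<subseteq> P"
  shows "nc_sub (nc_mult (elem_sym lt k S) (elem_sym lt l S))
                (nc_mult (elem_sym lt l S) (elem_sym lt k S)) \<in> I_plac P lt"
proof -
  interpret plac P lt using assms(2,3) by unfold_locales
  have fin: "finite S" using finite_subset[OF assms(4) assms(1)] .
  have "es S k * es S l \<approx> es S l * es S k" by (rule main_comm[OF fin assms(4)])
  then have "es S k * es S l - es S l * es S k \<in> Jid P lt" by (simp add: eqv_def)
  then have "phi (es S k * es S l - es S l * es S k) \<in> I_plac P lt" by (rule Jid_sub)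
  moreover have "phi (es S k * es S l - es S l * es S k) =
      nc_sub (nc_mult (elem_sym lt k S) (elem_sym lt l S)) (nc_mult (elem_sym lt l S) (elem_sym lt k S))"
    by (simp add: phi_diff phi_mult phi_es[OF fin])
  ultimately show ?thesis by simp
qed



end
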